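(* Let $f$ be a real function on $[0,1]$ satisfying $|f(x')-f(x'')|\le H|x'-x''|^{1/N}$ for all $x',x''\in[0,1]$, and let $x^*\in[0,1]$ be a global minimizer of $f$ on $[0,1]$. Apply PLT to $f$ with the stopping rule disregarded, let $\{x^q\}$ be the resulting infinite sequence of trial points, and assume $p(l)\le Q<\infty$ for all $l>1$. For each iteration $l$, let $j=j(l)$ be the index of an interval $[x_{j-1},x_j]$ (in the ordering of Step 1 at iteration $l$) containing $x^*$, and define $K_j=\max\{(z_{j-1}-f(x^* ))(x^*-x_{j-1})^{-1/N},\ (z_j-f(x^* ))(x_j-x^* )^{-1/N}\}$ and $M_j=|z_{j-1}-z_j|(x_j-x_{j-1})^{-1/N}$. Suppose there is an infinite set of iteration numbers $\{h\}$ such that for every $l\in\{h\}$ one has $4^{1-1/N}K_j^2\ge M_j^2$ and $r\mu_j\ge 2^{1-1/N}K_j+\left(4^{1-1/N}K_j^2-M_j^2\right)^{1/2}$, where $j=j(l)$. Then $x^*$ is a limit point of $\{x^q\}$.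
   Context: Algorithm PLT (parallel information algorithm with local tuning) for minimizing $f$ on $[0,1]$; parameters: integer $N\ge1$, reliability parameter $r>1$, small number $\xi>0$. A "trial" is an evaluation of $f$ at a point. Step 0: perform $q(1)>1$ initial trials at $x^1=0$, $x^2=1$ and some interior points $x^3,\dots,x^{q(1)}\in(0,1)$; set $l=1$. At iteration $l$, let $q=q(l)$ be the number of trials made so far. Step 1: order all trial points as $0=x_1<x_2<\dots<x_q=1$ and set $z_i=f(x_i)$. Step 2: for $2\le j\le q$ compute $\mu_j=\max\{\lambda_j,\gamma_j,\xi\}$, where $\lambda_j=\max\{|z_i-z_{i-1}|/(x_i-x_{i-1})^{1/N}: i\in I_j\}$ with $I_2=\{2,3\}$, $I_j=\{j-1,j,j+1\}$ for $3\le j\le q-1$, $I_q=\{q-1,q\}$; and $\gamma_j=\mu\,(x_j-x_{j-1})^{1/N}/(X^{\max})^{1/N}$ with $\mu=\max\{|z_i-z_{i-1}|/(x_i-x_{i-1})^{1/N}:2\le i\le q\}$ and $X^{\max}=\max\{x_i-x_{i-1}:2\le i\le q\}$. Step 3: for $2\le j\le q$ compute the characteristic $R(j)=r\mu_j(x_j-x_{j-1})^{1/N}+\frac{(z_j-z_{j-1})^2}{r\mu_j(x_j-x_{j-1})^{1/N}}-(z_j+z_{j-1})$. Step 4: choose $p=p(l+1)\le q(l)-1$ and distinct indices $t_1,\dots,t_p$ being the indices of the $p$ largest characteristics ($t_1=\arg\max\{R(i):1<i\le q\}$, $t_k=\arg\max\{R(i):1<i\le q,\ i\ne t_s, 1\le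 s\le k-1\}$); the new trial points are $x^{q+k}=\tfrac12(x_{t_k-1}+x_{t_k})-\frac{1}{2r}\left(\frac{|z_{t_k}-z_{t_k-1}|}{\mu_{t_k}}\right)^N\operatorname{sign}(z_{t_k}-z_{t_k-1})$, $1\le k\le p$. Step 5: evaluate $f$ at these $p$ points in parallel, set $q(l+1)=q(l)+p(l+1)$, $l\leftarrow l+1$, and return to Step 1. (In the paper $f(x)=\phi(y(x))$ where $y$ is a Peano-type space-filling curve mapping $[0,1]$ onto a hyperinterval $D\subset\mathbb R^N$ and $\phi$ is Lipschitz on $D$, which yields the H\"older condition above.) *)

theory Defs
  imports "HOL-Analysis.Analysis"
begin

text \<open>Conventions. A sorted list xs of the current trial points is used; the paper's
  point x_i (1-based, 1 <= i <= q) is xs ! (i - 1), and z_i = f x_i.\<close>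

definition pts :: "(nat \<Rightarrow> real) \<Rightarrow> nat \<Rightarrow> real list" where
  "pts x n = sorted_list_of_set (x ` {1..n})"

definition gapP :: "real list \<Rightarrow> nat \<Rightarrow> real" where
  "gapP xs i = xs ! (i - 1) - xs ! (i - 2)"

definition dd :: "(real \<Rightarrow> real) \<Rightarrow> nat \<Rightarrow> real list \<Rightarrow> nat \<Rightarrow> real" where
  "dd f N xs i = \<bar>f (xs ! (i - 1)) - f (xs ! (i - 2))\<bar> / (gapP xs i) powr (1 / real N)"

definition Iset :: "real list \<Rightarrow> nat \<Rightarrow> nat set" where
  "Iset xs j = {j - 1, j, j + 1} \<inter> {2..length xs}"

definition lam :: "(real \<Rightarrow> real) \<Rightarrow> nat \<Rightarrow> real list \<Rightarrow> nat \<Rightarrow> real" where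
  "lam f N xs j = Max (dd f N xs ` Iset xs j)"

definition mug :: "(real \<Rightarrow> real) \<Rightarrow> nat \<Rightarrow> real list \<Rightarrow> real" where
  "mug f N xs = Max (dd f N xs ` {2..length xs})"

definition Xmax :: "real list \<Rightarrow> real" where
  "Xmax xs = Max (gapP xs ` {2..length xs})"

definition gam :: "(real \<Rightarrow> real) \<Rightarrow> nat \<Rightarrow> real list \<Rightarrow> nat \<Rightarrow> real" where
  "gam f N xs j = mug f N xs * (gapP xs j) powr (1 / real N) / (Xmax xs) powr (1 / real N)"

definition muj :: "(real \<Rightarrow> real) \<Rightarrow> nat \<Rightarrow> real \<Rightarrow> real list \<Rightarrow> nat \<Rightarrow> real" where
  "muj f N xi xs j = max (max (lam f N xs j) (gam f N xs j)) xi"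

definition charR :: "(real \<Rightarrow> real) \<Rightarrow> nat \<Rightarrow> real \<Rightarrow> real \<Rightarrow> real list \<Rightarrow> nat \<Rightarrow> real" where
  "charR f N r xi xs j =
     (let zj = f (xs ! (j - 1)); zj1 = f (xs ! (j - 2));
          a = r * muj f N xi xs j * (gapP xs j) powr (1 / real N)
      in a + (zj - zj1)\<^sup>2 / a - (zj + zj1))"

definition newpt :: "(real \<Rightarrow> real) \<Rightarrow> nat \<Rightarrow> real \<Rightarrow> real \<Rightarrow> real list \<Rightarrow> nat \<Rightarrow> real" where
  "newpt f N r xi xs j =
     (let zj = f (xs ! (j - 1)); zj1 = f (xs ! (j - 2))
      in (xs ! (j - 2) + xs ! (j - 1)) / 2
         - (1 / (2 * r)) * (\<bar>zj - zj1\<bar> / muj f N xi xs j) ^ N * sgn (zj - zj1))"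

text \<open>A run of PLT (stopping rule disregarded): x q is the q-th trial point (q >= 1),
  qn l = q(l) is the number of trials before iteration l (l >= 1), p (l+1) is the number of
  points chosen at iteration l, and t l k (1 <= k <= p(l+1)) are the chosen interval indices.\<close>

definition PLT_run ::
  "(real \<Rightarrow> real) \<Rightarrow> nat \<Rightarrow> real \<Rightarrow> real \<Rightarrow> (nat \<Rightarrow> real) \<Rightarrow> (nat \<Rightarrow> nat)
    \<Rightarrow> (nat \<Rightarrow> nat) \<Rightarrow> (nat \<Rightarrow> nat \<Rightarrow> nat) \<Rightarrow> bool" where
  "PLT_run f N r xi x qn p t \<longleftrightarrow>
     qn 1 > 1 \<and> x 1 = 0 \<and> x 2 = 1 \<and> (\<forall>i\<in>{3..qn 1}. 0 < x i \<and> x i < 1) \<and>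
     (\<forall>l\<ge>1. qn (Suc l) = qn l + p (Suc l) \<and> 1 \<le> p (Suc l) \<and> p (Suc l) \<le> qn l - 1 \<and>
        (let xs = pts x (qn l) in
           inj_on (t l) {1..p (Suc l)} \<and>
           (\<forall>k\<in>{1..p (Suc l)}.
              t l k \<in> {2..length xs} \<and>
              (\<forall>i\<in>{2..length xs} - t l ` {1..<k}. charR f N r xi xs i \<le> charR f N r xi xs (t l k)) \<and>
              x (qn l + k) = newpt f N r xi xs (t l k))))"

definition Kj :: "(real \<Rightarrow> real) \<Rightarrow> nat \<Rightarrow> real \<Rightarrow> real list \<Rightarrow> nat \<Rightarrow> real" where
  "Kj f N xstar xs j =
     max ((f (xs ! (j - 2)) - f xstar) / (xstar - xs ! (j - 2)) powr (1 / real N))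
         ((f (xs ! (j - 1)) - f xstar) / (xs ! (j - 1) - xstar) powr (1 / real N))"

definition Mj :: "(real \<Rightarrow> real) \<Rightarrow> nat \<Rightarrow> real list \<Rightarrow> nat \<Rightarrow> real" where
  "Mj f N xs j = \<bar>f (xs ! (j - 2)) - f (xs ! (j - 1))\<bar> / (gapP xs j) powr (1 / real N)"

end

theory Submission
  imports Defs
begin

lemma consec_lt:
  fixes xs :: "real list"
  assumes "sorted xs" "distinct xs" "2 \<le> t" "t \<le> length xs"
  shows "xs!(t-2) < xs!(t-1)"
proof -
  have "xs!(t-2) \<le> xs!(t-1)" using assms by (intro sorted_nth_mono) auto
  moreover have "xs!(t-2) \<noteq> xs!(t-1)" using assms by (simp add: nth_eq_iff_index_eq)
  ultimately show ?thesis by simp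
qed

lemma consec_out:
  fixes xs :: "real list"
  assumes "sorted xs" "2 \<le> t" "t \<le> length xs" "z \<in> set xs"
  shows "z \<le> xs!(t-2) \<or> xs!(t-1) \<le> z"
proof -
  obtain i where i: "i < length xs" "z = xs!i" using assms(4) by (metis in_set_conv_nth)
  show ?thesis
  proof (cases "i \<le> t - 2")
    case True
    have "t - 2 < length xs" using assms by simp
    then show ?thesis using i assms True sorted_nth_mono[of xs i "t-2"] by simp
  next
    case False then have "t - 1 \<le> i" by simp
    then show ?thesis using i assms sorted_nth_mono[of xs "t-1" i] by simp
  qed
qed

lemma gap_pos:
  fixes xs :: "real list"
  assumes "sorted xs" "distinct xs" "2 \<le> t" "t \<le> length xs"
  shows "gapP xs t > 0"
  using consec_lt[OF assms] by (simp add: gapP_def)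

lemma dd_le_muj:
  assumes "2 \<le> t" "t \<le> length xs"
  shows "dd f N xs t \<le> muj f N xi xs t" "xi \<le> muj f N xi xs t"
proof -
  have "t \<in> Iset xs t" using assms by (simp add: Iset_def)
  then have "dd f N xs t \<le> lam f N xs t" unfolding lam_def
    by (intro Max_ge) (auto simp: Iset_def)
  then show "dd f N xs t \<le> muj f N xi xs t" by (simp add: muj_def)
  show "xi \<le> muj f N xi xs t" by (simp add: muj_def)
qed

lemma powr_inv_pow:
  fixes y :: real assumes "y > 0" "N \<ge> 1"
  shows "(y powr (1 / real N)) ^ N = y"
proof -
  have "(y powr (1 / real N)) ^ N = (y powr (1 / real N)) powr real N"
    using assms by (simp add: powr_realpow)
  also have "\<dots> = y" using assms by (simp add: powr_powr)
  finally show ?thesis .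
qed

lemma newpt_margin:
  fixes xs :: "real list"
  assumes N: "N \<ge> 1" and r: "r > 1" and xi: "xi > 0"
    and s: "sorted xs" "distinct xs" "2 \<le> t" "t \<le> length xs"
  shows "newpt f N r xi xs t - xs!(t-2) \<ge> gapP xs t * (1 - 1/r) / 2"
    and "xs!(t-1) - newpt f N r xi xs t \<ge> gapP xs t * (1 - 1/r) / 2"
proof -
  define a where "a = xs!(t-2)"
  define b where "b = xs!(t-1)"
  define c where "c = f b - f a"
  define \<mu> where "\<mu> = muj f N xi xs t"
  define \<Delta> where "\<Delta> = gapP xs t"
  define D where "D = \<Delta> powr (1 / real N)"
  have \<Delta>: "\<Delta> > 0" unfolding \<Delta>_def using gap_pos[OF s] .
  have \<Delta>ab: "\<Delta> = b - a" by (simp add: \<Delta>_def gapP_def a_def b_def)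
  have D: "D > 0" using \<Delta> by (simp add: D_def)
  have mu: "\<mu> \<ge> xi" "dd f N xs t \<le> \<mu>" using dd_le_muj[OF s(3,4)] by (auto simp: \<mu>_def)
  have mupos: "\<mu> > 0" using mu xi by simp
  have ddeq: "dd f N xs t = \<bar>c\<bar> / D" by (simp add: dd_def c_def D_def \<Delta>_def a_def b_def)
  have "\<bar>c\<bar> \<le> \<mu> * D" using mu(2) D ddeq by (simp add: divide_le_eq mult.commute)
  then have q: "\<bar>c\<bar> / \<mu> \<le> D" using mupos by (simp add: divide_le_eq mult.commute)
  have "(\<bar>c\<bar> / \<mu>) ^ N \<le> D ^ N" using q mupos by (intro power_mono) auto
  also have "D ^ N = \<Delta>" unfolding D_def using powr_inv_pow[OF \<Delta> N] .
  finally have cN: "(\<bar>c\<bar> / \<mu>) ^ N \<le> \<Delta>" .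
  define sh where "sh = (1 / (2 * r)) * (\<bar>c\<bar> / \<mu>) ^ N * sgn c"
  have np: "newpt f N r xi xs t = (a + b) / 2 - sh"
    by (simp add: newpt_def sh_def c_def a_def b_def \<mu>_def Let_def)
  have A0: "(\<bar>c\<bar> / \<mu>) ^ N \<ge> 0" using mupos by simp
  have "\<bar>sgn c\<bar> \<le> (1::real)" by (simp add: sgn_if)
  then have "\<bar>sh\<bar> \<le> (1 / (2 * r)) * (\<bar>c\<bar> / \<mu>) ^ N"
  proof -
    have "\<bar>sh\<bar> = (1 / (2 * r)) * (\<bar>c\<bar> / \<mu>) ^ N * \<bar>sgn c\<bar>"
      using r A0 unfolding sh_def abs_mult by simp
    also have "\<dots> \<le> (1 / (2 * r)) * (\<bar>c\<bar> / \<mu>) ^ N * 1"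
      using r A0 \<open>\<bar>sgn c\<bar> \<le> 1\<close> by (intro mult_left_mono) auto
    finally show ?thesis by simp
  qed
  also have "\<dots> \<le> (1 / (2 * r)) * \<Delta>" using cN r by (intro mult_left_mono) auto
  finally have shb: "\<bar>sh\<bar> \<le> \<Delta> / (2 * r)" by simp
  have e: "\<Delta> * (1 - 1/r) / 2 = \<Delta>/2 - \<Delta> / (2*r)" using r by (simp add: field_simps)
  have n1: "newpt f N r xi xs t - a = \<Delta>/2 - sh" using np \<Delta>ab by (simp add: field_simps)
  have n2: "b - newpt f N r xi xs t = \<Delta>/2 + sh" using np \<Delta>ab by (simp add: field_simps)
  have shb2: "sh \<le> \<Delta> / (2 * r)" "- sh \<le> \<Delta> / (2 * r)" using shb by (auto simp: abs_le_iff)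
  show "newpt f N r xi xs t - xs!(t-2) \<ge> gapP xs t * (1 - 1/r) / 2"
    using shb2 e n1 unfolding \<Delta>_def[symmetric] a_def[symmetric] by linarith
  show "xs!(t-1) - newpt f N r xi xs t \<ge> gapP xs t * (1 - 1/r) / 2"
    using shb2 e n2 unfolding \<Delta>_def[symmetric] b_def[symmetric] by linarith
qed

lemma concav:
  fixes u v p :: real assumes u: "0 \<le> u" and v: "0 \<le> v" and p: "0 < p" "p \<le> 1"
  shows "u powr p + v powr p \<le> 2 powr (1 - p) * (u + v) powr p"
proof -
  have two: "2 powr (1 - p) \<ge> 1" using p by (intro ge_one_powr_ge_zero) auto
  show ?thesis
  proof (cases "u = 0 \<or> v = 0")
    case True
    then show ?thesis
    proof
      assume "u = 0" then show ?thesis using two v by (simp add: mult_le_cancel_right1)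
    next
      assume "v = 0" then show ?thesis using two u by (simp add: mult_le_cancel_right1)
    qed
  next
    case False
    then have up: "u > 0" and vp: "v > 0" using u v by auto
    define S where "S = u + v"
    have S: "S > 0" using up vp by (simp add: S_def)
    have Y: "(2*w/S) powr p \<le> p*(2*w/S) + (1-p)" if "w > 0" for w
      using Youngs_inequality_0[of p "1-p" "2*w/S" 1] that S p by simp
    have E: "(2*w/S) powr p = 2 powr p * w powr p / S powr p" if "w > 0" for w
      using that S by (simp add: powr_divide powr_mult)
    have "2 powr p * u powr p / S powr p + 2 powr p * v powr p / S powr p \<le> p * (2 * u / S) + (1 - p) + (p * (2 * v / S) + (1 - p))"
      using Y[OF up] Y[OF vp] E[OF up] E[OF vp] by linarith
    also have "\<dots> = p * (2 * u / S + 2 * v / S) + 2 * (1 - p)" by (simp add: algebra_simps)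
    also have "2 * u / S + 2 * v / S = 2 * S / S" by (simp add: S_def add_divide_distrib[symmetric] algebra_simps)
    also have "2 * S / S = 2" using S by simp
    also have "p * 2 + 2 * (1 - p) = 2" by simp
    finally have "2 powr p * (u powr p + v powr p) / S powr p \<le> 2" by (simp add: add_divide_distrib distrib_left)
    then have "2 powr p * (u powr p + v powr p) \<le> 2 * S powr p" using S by (simp add: divide_le_eq)
    then have "u powr p + v powr p \<le> 2 * S powr p / 2 powr p" by (simp add: le_divide_eq mult.commute)
    also have "2 * S powr p / 2 powr p = 2 powr (1 - p) * S powr p" by (simp add: powr_diff)
    finally show ?thesis by (simp add: S_def)
  qed
qed

lemma dd_nonneg: "dd f N xs i \<ge> 0"
  by (simp add: dd_def)

lemma dd_le_H:
  fixes xs :: "real list"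
  assumes holder: "\<forall>x1\<in>{0..1}. \<forall>x2\<in>{0..1}. \<bar>f x1 - f x2\<bar> \<le> Hc * \<bar>x1 - x2\<bar> powr (1 / real N)"
    and sub: "set xs \<subseteq> {0..1}" and s: "sorted xs" "distinct xs" "2 \<le> i" "i \<le> length xs"
  shows "dd f N xs i \<le> Hc"
proof -
  define a where "a = xs!(i-2)"
  define b where "b = xs!(i-1)"
  have "a \<in> set xs" "b \<in> set xs" using s by (auto simp: a_def b_def)
  then have ab: "a \<in> {0..1}" "b \<in> {0..1}" using sub by auto
  have g: "gapP xs i = b - a" by (simp add: gapP_def a_def b_def)
  have gp: "gapP xs i > 0" using gap_pos[OF s] .
  have "\<bar>f b - f a\<bar> \<le> Hc * \<bar>b - a\<bar> powr (1 / real N)" using holder ab by auto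
  also have "\<bar>b - a\<bar> = gapP xs i" using g gp by simp
  finally have "\<bar>f b - f a\<bar> \<le> Hc * gapP xs i powr (1 / real N)" .
  moreover have "dd f N xs i = \<bar>f b - f a\<bar> / gapP xs i powr (1 / real N)" by (simp add: dd_def a_def b_def)
  ultimately show ?thesis using gp by (simp add: divide_le_eq)
qed

lemma muj_le:
  fixes xs :: "real list"
  assumes holder: "\<forall>x1\<in>{0..1}. \<forall>x2\<in>{0..1}. \<bar>f x1 - f x2\<bar> \<le> Hc * \<bar>x1 - x2\<bar> powr (1 / real N)"
    and sub: "set xs \<subseteq> {0..1}" and s: "sorted xs" "distinct xs" "2 \<le> j" "j \<le> length xs"
  shows "muj f N xi xs j \<le> max Hc xi"
proof -
  have ddH: "dd f N xs i \<le> Hc" if "i \<in> {2..length xs}" for i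
    using dd_le_H[OF holder sub s(1,2)] that by auto
  have jI: "j \<in> Iset xs j" using s by (simp add: Iset_def)
  have "lam f N xs j \<le> Hc" unfolding lam_def
    using jI ddH by (subst Max_le_iff) (auto simp: Iset_def)
  have mugH: "mug f N xs \<le> Hc" unfolding mug_def
    using s ddH by (subst Max_le_iff) auto
  have mug0: "mug f N xs \<ge> 0" unfolding mug_def
    using s dd_nonneg by (subst Max_ge_iff) auto
  have gp: "gapP xs j > 0" using gap_pos[OF s] .
  have gX: "gapP xs j \<le> Xmax xs" unfolding Xmax_def using s by (intro Max_ge) auto
  have "gapP xs j powr (1 / real N) \<le> Xmax xs powr (1 / real N)"
    using gp gX by (intro powr_mono2) auto
  moreover have "Xmax xs powr (1 / real N) > 0" using gp gX by simp
  ultimately have "gapP xs j powr (1 / real N) / Xmax xs powr (1 / real N) \<le> 1"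
    by (simp add: divide_le_eq)
  moreover have "gam f N xs j = mug f N xs * (gapP xs j powr (1 / real N) / Xmax xs powr (1 / real N))"
    by (simp add: gam_def)
  ultimately have "gam f N xs j \<le> mug f N xs"
    using mug0 mult_left_mono[of _ 1 "mug f N xs"] by (metis mult.right_neutral)
  then show ?thesis using \<open>lam f N xs j \<le> Hc\<close> mugH unfolding muj_def max_def by auto
qed

lemma charR_upper:
  fixes xs :: "real list"
  assumes holder: "\<forall>x1\<in>{0..1}. \<forall>x2\<in>{0..1}. \<bar>f x1 - f x2\<bar> \<le> Hc * \<bar>x1 - x2\<bar> powr (1 / real N)"
    and sub: "set xs \<subseteq> {0..1}" and s: "sorted xs" "distinct xs" "2 \<le> t" "t \<le> length xs"
    and r: "r > 1" and xi: "xi > 0" and fmin: "\<forall>y\<in>set xs. fs \<le> f y"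
  shows "charR f N r xi xs t + 2 * fs \<le> (r + 1/r) * max Hc xi * gapP xs t powr (1 / real N)"
proof -
  define zj where "zj = f (xs ! (t - 1))"
  define zj1 where "zj1 = f (xs ! (t - 2))"
  define \<mu> where "\<mu> = muj f N xi xs t"
  define D where "D = gapP xs t powr (1 / real N)"
  define a where "a = r * \<mu> * D"
  define c where "c = zj - zj1"
  have D: "D > 0" using gap_pos[OF s] by (simp add: D_def)
  have mu: "\<mu> \<ge> xi" "dd f N xs t \<le> \<mu>" using dd_le_muj[OF s(3,4)] by (auto simp: \<mu>_def)
  have mupos: "\<mu> > 0" using mu xi by simp
  have muC: "\<mu> \<le> max Hc xi" using muj_le[OF holder sub s] by (simp add: \<mu>_def)
  have apos: "a > 0" using r mupos D by (simp add: a_def)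
  have R: "charR f N r xi xs t = a + c\<^sup>2 / a - (zj + zj1)"
    by (simp add: charR_def Let_def zj_def zj1_def a_def \<mu>_def D_def c_def)
  have ddeq: "dd f N xs t = \<bar>c\<bar> / D" by (simp add: dd_def c_def D_def zj_def zj1_def)
  have "\<bar>c\<bar> \<le> \<mu> * D" using mu(2) D ddeq by (simp add: divide_le_eq mult.commute)
  then have "c\<^sup>2 \<le> (\<mu> * D)\<^sup>2" by (metis abs_ge_zero power2_abs power_mono)
  then have "c\<^sup>2 / a \<le> (\<mu> * D)\<^sup>2 / a" using apos by (simp add: divide_right_mono)
  also have "(\<mu> * D)\<^sup>2 / a = \<mu> * D / r" using r mupos D by (simp add: a_def power2_eq_square field_simps)
  finally have ca: "c\<^sup>2 / a \<le> \<mu> * D / r" .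
  have z: "zj \<ge> fs" "zj1 \<ge> fs" using fmin s by (auto simp: zj_def zj1_def)
  have "charR f N r xi xs t + 2 * fs \<le> a + \<mu> * D / r" using R ca z by linarith
  also have "a + \<mu> * D / r = (r + 1/r) * \<mu> * D" by (simp add: a_def field_simps)
  also have "\<dots> \<le> (r + 1/r) * max Hc xi * D" using muC r D by (intro mult_right_mono mult_left_mono) auto
  finally show ?thesis by (simp add: D_def)
qed

lemma g_bound:
  fixes s B M rx Sm :: real
  assumes B: "0 \<le> B" and M: "0 \<le> M" and BM: "M\<^sup>2 \<le> B\<^sup>2" and sB: "s \<ge> B + sqrt (B\<^sup>2 - M\<^sup>2)"
    and srx: "s \<ge> rx" and rx: "rx > 0" and sS: "s \<le> Sm"
  shows "s + M\<^sup>2 / s - B \<ge> min (rx / 4) (rx\<^sup>2 / (8 * Sm))"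
proof -
  have sp: "s > 0" using srx rx by simp
  have Sp: "Sm > 0" using sS sp by simp
  have Ms: "M\<^sup>2 / s \<ge> 0" using sp by simp
  have sq0: "sqrt (B\<^sup>2 - M\<^sup>2) \<ge> 0" using BM by simp
  show ?thesis
  proof (cases "B \<le> rx / 2")
    case True
    then have "s + M\<^sup>2 / s - B \<ge> rx / 4" using srx Ms rx by linarith
    then show ?thesis using min.cobounded1[of "rx/4" "rx\<^sup>2 / (8 * Sm)"] by linarith
  next
    case False
    then have Bg: "B > rx / 2" by simp
    show ?thesis
    proof (cases "M\<^sup>2 \<ge> B\<^sup>2 / 2")
      case True
      have "(rx / 2)\<^sup>2 \<le> B\<^sup>2" using Bg rx by (intro power_mono) auto
      then have "rx\<^sup>2 / 8 \<le> M\<^sup>2" using True by (simp add: power_divide)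
      then have "rx\<^sup>2 / 8 / Sm \<le> M\<^sup>2 / Sm" using Sp by (intro divide_right_mono) auto
      also have "M\<^sup>2 / Sm \<le> M\<^sup>2 / s" using sp sS by (intro divide_left_mono) auto
      finally have "rx\<^sup>2 / (8 * Sm) \<le> M\<^sup>2 / s" by simp
      moreover have "s - B \<ge> 0" using sB sq0 by linarith
      ultimately show ?thesis using min.cobounded2[of "rx/4" "rx\<^sup>2 / (8 * Sm)"] by linarith
    next
      case False
      have "0 \<le> M\<^sup>2" by simp
      have "(B / 2)\<^sup>2 = B\<^sup>2 / 4" by (simp add: power_divide)
      then have "(B / 2)\<^sup>2 \<le> B\<^sup>2 - M\<^sup>2" using False \<open>0 \<le> M\<^sup>2\<close> by linarith
      then have "B / 2 \<le> sqrt (B\<^sup>2 - M\<^sup>2)" using B by (metis real_le_rsqrt)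
      then have "s - B \<ge> rx / 4" using sB Bg by simp
      then show ?thesis using Ms min.cobounded1[of "rx/4" "rx\<^sup>2 / (8 * Sm)"] by linarith
    qed
  qed
qed

lemma charR_lower:
  fixes xs :: "real list"
  assumes holder: "\<forall>x1\<in>{0..1}. \<forall>x2\<in>{0..1}. \<bar>f x1 - f x2\<bar> \<le> Hc * \<bar>x1 - x2\<bar> powr (1 / real N)"
    and sub: "set xs \<subseteq> {0..1}" and s: "sorted xs" "distinct xs" "2 \<le> j" "j \<le> length xs"
    and N: "N \<ge> 1" and r: "r > 1" and xi: "xi > 0"
    and fmin: "\<forall>y\<in>{0..1}. f xstar \<le> f y"
    and loc: "xs!(j-2) \<le> xstar" "xstar \<le> xs!(j-1)"
    and c1: "4 powr (1 - 1 / real N) * (Kj f N xstar xs j)\<^sup>2 \<ge> (Mj f N xs j)\<^sup>2"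
    and c2: "r * muj f N xi xs j \<ge> 2 powr (1 - 1 / real N) * Kj f N xstar xs j
                   + sqrt (4 powr (1 - 1 / real N) * (Kj f N xstar xs j)\<^sup>2 - (Mj f N xs j)\<^sup>2)"
  shows "charR f N r xi xs j + 2 * f xstar \<ge>
           gapP xs j powr (1 / real N) * min (r * xi / 4) ((r * xi)\<^sup>2 / (8 * (r * max Hc xi)))"
proof -
  define p where "p = 1 / real N"
  have p: "0 < p" "p \<le> 1" using N by (auto simp: p_def)
  define a0 where "a0 = xs!(j-2)"
  define b0 where "b0 = xs!(j-1)"
  define u where "u = xstar - a0"
  define v where "v = b0 - xstar"
  define fs where "fs = f xstar"
  define K where "K = Kj f N xstar xs j"
  define M where "M = Mj f N xs j"
  define \<mu> where "\<mu> = muj f N xi xs j"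
  define D where "D = gapP xs j powr p"
  define B where "B = 2 powr (1 - p) * K"
  define sv where "sv = r * \<mu>"
  define zj where "zj = f b0"
  define zj1 where "zj1 = f a0"
  have u: "u \<ge> 0" and v: "v \<ge> 0" using loc by (auto simp: u_def v_def a0_def b0_def)
  have gap: "gapP xs j = u + v" by (simp add: gapP_def u_def v_def a0_def b0_def)
  have gp: "gapP xs j > 0" using gap_pos[OF s] .
  have D: "D > 0" using gp by (simp add: D_def)
  have a0b0: "a0 \<in> {0..1}" "b0 \<in> {0..1}"
  proof -
    have "a0 \<in> set xs" "b0 \<in> set xs" using s by (auto simp: a0_def b0_def)
    then show "a0 \<in> {0..1}" "b0 \<in> {0..1}" using sub by auto
  qed
  have xs01: "xstar \<in> {0..1}" using a0b0 loc by (auto simp: a0_def b0_def)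
  have za: "zj1 \<ge> fs" "zj \<ge> fs" using fmin a0b0 by (auto simp: zj_def zj1_def fs_def)
  have Kdef: "K = max ((zj1 - fs) / u powr p) ((zj - fs) / v powr p)"
    by (simp add: K_def Kj_def zj_def zj1_def fs_def u_def v_def a0_def b0_def p_def)
  have K0: "K \<ge> 0" using za unfolding Kdef by (simp add: le_max_iff_disj)
  have Ku: "zj1 - fs \<le> K * u powr p"
  proof (cases "u = 0")
    case True then have "a0 = xstar" by (simp add: u_def)
    then show ?thesis using True by (simp add: zj1_def fs_def)
  next
    case False then have "u powr p > 0" using u by simp
    moreover have "(zj1 - fs) / u powr p \<le> K" unfolding Kdef by simp
    ultimately show ?thesis by (simp add: divide_le_eq mult.commute)
  qed
  have Kv: "zj - fs \<le> K * v powr p"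
  proof (cases "v = 0")
    case True then have "b0 = xstar" by (simp add: v_def)
    then show ?thesis using True by (simp add: zj_def fs_def)
  next
    case False then have "v powr p > 0" using v by simp
    moreover have "(zj - fs) / v powr p \<le> K" unfolding Kdef by simp
    ultimately show ?thesis by (simp add: divide_le_eq mult.commute)
  qed
  have "(zj1 - fs) + (zj - fs) \<le> K * (u powr p + v powr p)" using Ku Kv by (simp add: distrib_left)
  also have "\<dots> \<le> K * (2 powr (1 - p) * (u + v) powr p)" using concav[OF u v p] K0 by (intro mult_left_mono) auto
  also have "\<dots> = B * D" by (simp add: B_def D_def gap)
  finally have sumB: "(zj1 - fs) + (zj - fs) \<le> B * D" .
  have mu: "\<mu> \<ge> xi" using dd_le_muj[OF s(3,4)] by (auto simp: \<mu>_def)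
  have mupos: "\<mu> > 0" using mu xi by simp
  have muC: "\<mu> \<le> max Hc xi" using muj_le[OF holder sub s] by (simp add: \<mu>_def)
  have svp: "sv > 0" using r mupos by (simp add: sv_def)
  have R: "charR f N r xi xs j = sv * D + (zj - zj1)\<^sup>2 / (sv * D) - (zj + zj1)"
    by (simp add: charR_def Let_def zj_def zj1_def sv_def \<mu>_def D_def a0_def b0_def p_def)
  have Mdef: "M = \<bar>zj1 - zj\<bar> / D" by (simp add: M_def Mj_def zj_def zj1_def D_def a0_def b0_def p_def)
  have c2eq: "(zj - zj1)\<^sup>2 = M\<^sup>2 * D\<^sup>2" using D unfolding Mdef by (simp add: power_divide power2_abs power2_commute)
  have "(zj - zj1)\<^sup>2 / (sv * D) = M\<^sup>2 / sv * D" using D svp unfolding c2eq by (simp add: power2_eq_square field_simps)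
  then have "charR f N r xi xs j + 2 * fs \<ge> sv * D + M\<^sup>2 / sv * D - B * D" using R sumB by linarith
  then have low: "charR f N r xi xs j + 2 * fs \<ge> D * (sv + M\<^sup>2 / sv - B)" by (simp add: algebra_simps)
  have four: "4 powr (1 - p) * K\<^sup>2 = B\<^sup>2"
  proof -
    have "(4::real) powr (1 - p) = 2 powr (1 - p) * 2 powr (1 - p)"
      using powr_mult[of 2 2 "1 - p"] by simp
    then show ?thesis by (simp add: B_def power2_eq_square)
  qed
  have B0: "B \<ge> 0" using K0 by (simp add: B_def)
  have M0: "M \<ge> 0" using D by (simp add: Mdef)
  have BM: "M\<^sup>2 \<le> B\<^sup>2" using c1 four by (simp add: K_def M_def p_def)
  have sB: "sv \<ge> B + sqrt (B\<^sup>2 - M\<^sup>2)" using c2 four by (simp add: K_def M_def p_def B_def sv_def \<mu>_def)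
  have srx: "sv \<ge> r * xi" using mu r by (simp add: sv_def)
  have sS: "sv \<le> r * max Hc xi" using muC r by (simp add: sv_def)
  have g: "sv + M\<^sup>2 / sv - B \<ge> min (r * xi / 4) ((r * xi)\<^sup>2 / (8 * (r * max Hc xi)))"
    using g_bound[OF B0 M0 BM sB srx _ sS] r xi by simp
  have "D * min (r * xi / 4) ((r * xi)\<^sup>2 / (8 * (r * max Hc xi))) \<le> D * (sv + M\<^sup>2 / sv - B)"
    using g D by (intro mult_left_mono) auto
  then show ?thesis using low by (simp add: D_def fs_def p_def)
qed

lemma newpt_dist:
  fixes xs :: "real list"
  assumes N: "N \<ge> 1" and r: "r > 1" and xi: "xi > 0"
    and s: "sorted xs" "distinct xs" "2 \<le> t" "t \<le> length xs"
  shows "z \<in> set xs \<Longrightarrow> \<bar>newpt f N r xi xs t - z\<bar> \<ge> gapP xs t * (1 - 1/r) / 2"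
    and "xs!(t-2) \<le> newpt f N r xi xs t" "newpt f N r xi xs t \<le> xs!(t-1)"
proof -
  have m: "gapP xs t * (1 - 1/r) / 2 \<ge> 0" using gap_pos[OF s] r by simp
  note nm = newpt_margin[OF N r xi s, of f]
  show "xs!(t-2) \<le> newpt f N r xi xs t" "newpt f N r xi xs t \<le> xs!(t-1)" using nm m by linarith+
  assume z: "z \<in> set xs"
  show "\<bar>newpt f N r xi xs t - z\<bar> \<ge> gapP xs t * (1 - 1/r) / 2"
  proof -
    have "z \<le> xs!(t-2) \<or> xs!(t-1) \<le> z" using consec_out[OF s(1,3,4) z] .
    then show ?thesis
    proof
      assume "z \<le> xs!(t-2)"
      then have "newpt f N r xi xs t - z \<ge> gapP xs t * (1 - 1/r) / 2" using nm(1) by linarith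
      then show ?thesis by linarith
    next
      assume "xs!(t-1) \<le> z"
      then have "z - newpt f N r xi xs t \<ge> gapP xs t * (1 - 1/r) / 2" using nm(2) by linarith
      then show ?thesis by linarith
    qed
  qed
qed

lemma limpt_from_freq:
  fixes x :: "nat \<Rightarrow> real"
  assumes fr: "\<forall>e>0. \<forall>m. \<exists>n\<ge>m. \<bar>x n - a\<bar> < e"
  shows "\<exists>\<sigma>. strict_mono \<sigma> \<and> (\<lambda>n. x (\<sigma> n)) \<longlonglongrightarrow> a"
proof -
  define s where "s n i = (SOME j. i < j \<and> \<bar>x j - a\<bar> < 1 / real (Suc n))" for n i
  have s: "i < s n i \<and> \<bar>x (s n i) - a\<bar> < 1 / real (Suc n)" for n i
  proof -
    obtain j where "j \<ge> Suc i" "\<bar>x j - a\<bar> < 1 / real (Suc n)" using fr[rule_format, of "1 / real (Suc n)" "Suc i"] by auto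
    then have "\<exists>j. i < j \<and> \<bar>x j - a\<bar> < 1 / real (Suc n)" by (intro exI[of _ j]) auto
    then show ?thesis unfolding s_def by (rule someI_ex)
  qed
  define \<sigma> where "\<sigma> = rec_nat (s 0 0) s"
  have sm: "strict_mono \<sigma>" by (auto simp: \<sigma>_def s strict_mono_Suc_iff)
  have cl: "\<bar>x (\<sigma> (Suc n)) - a\<bar> < 1 / real (Suc n)" for n
    using s[of "\<sigma> n" n] by (simp add: \<sigma>_def)
  have "(\<lambda>n. x (\<sigma> n)) \<longlonglongrightarrow> a"
  proof (rule LIMSEQ_I)
    fix e :: real assume e: "e > 0"
    obtain n0 :: nat where n0: "1 / real (Suc n0) < e" using e by (metis nat_approx_posE)
    show "\<exists>no. \<forall>n\<ge>no. norm (x (\<sigma> n) - a) < e"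
    proof (intro exI allI impI)
      fix n assume n: "n \<ge> Suc n0"
      then obtain m where m: "n = Suc m" "m \<ge> n0" by (cases n) auto
      have "1 / real (Suc m) \<le> 1 / real (Suc n0)" using m by (intro divide_left_mono) auto
      then show "norm (x (\<sigma> n) - a) < e" using cl[of m] n0 m by simp
    qed
  qed
  then show ?thesis using sm by blast
qed

theorem theorem2:
  fixes f :: "real \<Rightarrow> real" and N :: nat and r xi Hc xstar :: real
    and x :: "nat \<Rightarrow> real" and qn p :: "nat \<Rightarrow> nat" and t :: "nat \<Rightarrow> nat \<Rightarrow> nat"
    and Q :: nat and Hs :: "nat set"
  assumes N: "N \<ge> 1" and r: "r > 1" and xi: "xi > 0"
    and holder: "\<forall>x1\<in>{0..1}. \<forall>x2\<in>{0..1}. \<bar>f x1 - f x2\<bar> \<le> Hc * \<bar>x1 - x2\<bar> powr (1 / real N)"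
    and xstar: "xstar \<in> {0..1}" "\<forall>y\<in>{0..1}. f xstar \<le> f y"
    and run: "PLT_run f N r xi x qn p t"
    and pbound: "\<forall>l>1. p l \<le> Q"
    and Hs: "infinite Hs" "Hs \<subseteq> {1..}"
    and cond: "\<forall>l\<in>Hs. \<exists>j. (let xs = pts x (qn l) in
                 2 \<le> j \<and> j \<le> length xs \<and> xs ! (j - 2) \<le> xstar \<and> xstar \<le> xs ! (j - 1) \<and>
                 4 powr (1 - 1 / real N) * (Kj f N xstar xs j)\<^sup>2 \<ge> (Mj f N xs j)\<^sup>2 \<and>
                 r * muj f N xi xs j \<ge> 2 powr (1 - 1 / real N) * Kj f N xstar xs j
                   + sqrt (4 powr (1 - 1 / real N) * (Kj f N xstar xs j)\<^sup>2 - (Mj f N xs j)\<^sup>2))"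
  shows "\<exists>\<sigma>. strict_mono \<sigma> \<and> (\<lambda>n. x (\<sigma> n)) \<longlonglongrightarrow> xstar"
proof (rule ccontr)
  assume nc: "\<not> ?thesis"
  have run0: "qn 1 > 1" "x 1 = 0" "x 2 = 1" "\<forall>i\<in>{3..qn 1}. 0 < x i \<and> x i < 1"
    using run unfolding PLT_run_def by auto
  have runS: "qn (Suc l) = qn l + p (Suc l)" "1 \<le> p (Suc l)" if "l \<ge> 1" for l
    using run that unfolding PLT_run_def by auto
  have runT: "t l k \<in> {2..length (pts x (qn l))} \<and>
      (\<forall>i\<in>{2..length (pts x (qn l))} - t l ` {1..<k}. charR f N r xi (pts x (qn l)) i \<le> charR f N r xi (pts x (qn l)) (t l k)) \<and>
      x (qn l + k) = newpt f N r xi (pts x (qn l)) (t l k)" if "l \<ge> 1" "k \<in> {1..p (Suc l)}" for l k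
  proof -
    have "\<forall>l\<ge>1. (let xs = pts x (qn l) in
           (\<forall>k\<in>{1..p (Suc l)}.
              t l k \<in> {2..length xs} \<and>
              (\<forall>i\<in>{2..length xs} - t l ` {1..<k}. charR f N r xi xs i \<le> charR f N r xi xs (t l k)) \<and>
              x (qn l + k) = newpt f N r xi xs (t l k)))"
      using run unfolding PLT_run_def by meson
    then show ?thesis using that unfolding Let_def by blast
  qed
  have ptsS: "set (pts x n) = x ` {1..n}" "sorted (pts x n)" "distinct (pts x n)" for n
    by (auto simp: pts_def)
  have qmono: "qn l \<le> qn l'" if "1 \<le> l" "l \<le> l'" for l l'
    using that(2)
  proof (induction l' rule: dec_induct)
    case base then show ?case by simp
  next
    case (step m) then show ?case using runS[of m] that(1) by simp
  qed
  have in01: "x ` {1..qn l} \<subseteq> {0..1}" if "l \<ge> 1" for l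
    using that
  proof (induction l rule: dec_induct)
    case base
    show ?case
    proof
      fix y assume "y \<in> x ` {1..qn 1}"
      then obtain n where n: "n \<in> {1..qn 1}" "y = x n" by auto
      show "y \<in> {0..1}"
      proof (cases "n \<ge> 3")
        case True
        then have "n \<in> {3..qn 1}" using n by auto
        then have "0 < x n \<and> x n < 1" using run0(4) by blast
        then show ?thesis using n by auto
      next
        case False then have "n = 1 \<or> n = 2" using n by auto
        then show ?thesis using run0 n by auto
      qed
    qed
  next
    case (step l)
    show ?case
    proof
      fix y assume "y \<in> x ` {1..qn (Suc l)}"
      then obtain n where n: "n \<in> {1..qn (Suc l)}" "y = x n" by auto
      show "y \<in> {0..1}"
      proof (cases "n \<le> qn l")
        case True
        then have "n \<in> {1..qn l}" using n by auto
        then show ?thesis using step.IH n by blast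
      next
        case False
        define k where "k = n - qn l"
        have k: "k \<in> {1..p (Suc l)}" using False n runS[OF step.hyps(1)] by (auto simp: k_def)
        have nk: "n = qn l + k" using False by (simp add: k_def)
        define xs where "xs = pts x (qn l)"
        have T: "t l k \<in> {2..length xs}" "x n = newpt f N r xi xs (t l k)"
          using runT[OF step.hyps(1) k] nk by (auto simp: xs_def)
        have s: "sorted xs" "distinct xs" "2 \<le> t l k" "t l k \<le> length xs" using T ptsS by (auto simp: xs_def)
        have e: "xs ! (t l k - 2) \<in> set xs" "xs ! (t l k - 1) \<in> set xs" using s by auto
        have "set xs \<subseteq> {0..1}" using step.IH ptsS by (simp add: xs_def)
        then show ?thesis using newpt_dist(2,3)[OF N r xi s, of f] e T n by force
      qed
    qed
  qed
  have "\<not> (\<forall>e>0. \<forall>m. \<exists>n\<ge>m. \<bar>x n - xstar\<bar> < e)"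
    using nc limpt_from_freq[of x xstar] by blast
  then obtain \<epsilon> m where \<epsilon>: "\<epsilon> > 0" "\<forall>n\<ge>m. \<bar>x n - xstar\<bar> \<ge> \<epsilon>" by (auto simp: not_less)
  define d where "d = Min (insert \<epsilon> ((\<lambda>n. \<bar>x n - xstar\<bar>) ` {n. n < m \<and> x n \<noteq> xstar}))"
  have dpos: "d > 0" unfolding d_def using \<epsilon> by (subst Min_gr_iff) auto
  have dle: "\<bar>x n - xstar\<bar> \<ge> d" if "x n \<noteq> xstar" for n
  proof (cases "n < m")
    case True then show ?thesis unfolding d_def using that by (intro Min_le) auto
  next
    case False
    then have "\<bar>x n - xstar\<bar> \<ge> \<epsilon>" using \<epsilon> by auto
    moreover have "d \<le> \<epsilon>" unfolding d_def by (intro Min_le) auto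
    ultimately show ?thesis by simp
  qed
  define C0 where "C0 = max Hc xi"
  define c0 where "c0 = min (r * xi / 4) ((r * xi)\<^sup>2 / (8 * (r * C0)))"
  have C0: "C0 > 0" using xi by (simp add: C0_def)
  have c0: "c0 > 0" using r xi C0 by (simp add: c0_def)
  define \<kappa> where "\<kappa> = d powr (1 / real N) * c0 / ((r + 1/r) * C0)"
  have rc: "(r + 1/r) * C0 > 0" using C0 r by (simp add: add_pos_pos)
  moreover have "d powr (1 / real N) * c0 > 0" using dpos c0 by simp
  ultimately have \<kappa>: "\<kappa> > 0" unfolding \<kappa>_def using divide_pos_pos by blast
  define \<eta> where "\<eta> = \<kappa> ^ N * (1 - 1/r) / 2"
  have \<eta>: "\<eta> > 0" using \<kappa> r by (simp add: \<eta>_def)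
  have sep: "x (qn l + 1) \<in> {0..1} \<and> (\<forall>n\<in>{1..qn l}. \<bar>x (qn l + 1) - x n\<bar> \<ge> \<eta>)" if l: "l \<in> Hs" for l
  proof -
    have l1: "l \<ge> 1" using l Hs by auto
    define xs where "xs = pts x (qn l)"
    have sub: "set xs \<subseteq> {0..1}" using in01[OF l1] ptsS by (simp add: xs_def)
    obtain j where j: "2 \<le> j" "j \<le> length xs" "xs ! (j - 2) \<le> xstar" "xstar \<le> xs ! (j - 1)"
      "4 powr (1 - 1 / real N) * (Kj f N xstar xs j)\<^sup>2 \<ge> (Mj f N xs j)\<^sup>2"
      "r * muj f N xi xs j \<ge> 2 powr (1 - 1 / real N) * Kj f N xstar xs j
                   + sqrt (4 powr (1 - 1 / real N) * (Kj f N xstar xs j)\<^sup>2 - (Mj f N xs j)\<^sup>2)"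
      using cond l unfolding Let_def xs_def by blast
    have sx: "sorted xs" "distinct xs" using ptsS by (auto simp: xs_def)
    note sj = sx j(1,2)
    have fmin: "\<forall>y\<in>set xs. f xstar \<le> f y" using sub xstar by auto
    have low: "charR f N r xi xs j + 2 * f xstar \<ge> gapP xs j powr (1 / real N) * c0"
      using charR_lower[OF holder sub sj N r xi xstar(2) j(3-6)] by (simp add: c0_def C0_def)
    have gd: "gapP xs j \<ge> d"
    proof -
      have lt: "xs ! (j - 2) < xs ! (j - 1)" using consec_lt[OF sj] .
      have mem: "xs ! (j - 2) \<in> x ` {1..qn l}" "xs ! (j - 1) \<in> x ` {1..qn l}"
        using sj ptsS[of "qn l"] by (auto simp: xs_def)
      have "xs ! (j - 2) \<noteq> xstar \<or> xs ! (j - 1) \<noteq> xstar" using lt by auto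
      then show ?thesis
      proof
        assume "xs ! (j - 2) \<noteq> xstar"
        then have "\<bar>xs ! (j - 2) - xstar\<bar> \<ge> d" using mem dle by auto
        then show ?thesis using j(3,4) by (simp add: gapP_def)
      next
        assume "xs ! (j - 1) \<noteq> xstar"
        then have "\<bar>xs ! (j - 1) - xstar\<bar> \<ge> d" using mem dle by auto
        then show ?thesis using j(3,4) by (simp add: gapP_def)
      qed
    qed
    have "d powr (1 / real N) \<le> gapP xs j powr (1 / real N)" using gd dpos by (intro powr_mono2) auto
    then have low2: "charR f N r xi xs j + 2 * f xstar \<ge> d powr (1 / real N) * c0"
      using low c0 mult_right_mono[of "d powr (1 / real N)" "gapP xs j powr (1 / real N)" c0] by linarith
    have k1: "(1::nat) \<in> {1..p (Suc l)}" using runS(2)[OF l1] by simp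
    define t1 where "t1 = t l 1"
    have T: "t1 \<in> {2..length xs}" "\<forall>i\<in>{2..length xs}. charR f N r xi xs i \<le> charR f N r xi xs t1"
      "x (qn l + 1) = newpt f N r xi xs t1"
      using runT[OF l1 k1] by (auto simp: xs_def t1_def)
    have st: "sorted xs" "distinct xs" "2 \<le> t1" "t1 \<le> length xs" using sx T(1) by auto
    have up: "charR f N r xi xs t1 + 2 * f xstar \<le> (r + 1/r) * C0 * gapP xs t1 powr (1 / real N)"
      using charR_upper[OF holder sub st r xi fmin] by (simp add: C0_def)
    have "charR f N r xi xs j \<le> charR f N r xi xs t1" using T(2) j(1,2) by auto
    then have "d powr (1 / real N) * c0 \<le> (r + 1/r) * C0 * gapP xs t1 powr (1 / real N)"
      using low2 up by linarith
    then have kg: "\<kappa> \<le> gapP xs t1 powr (1 / real N)"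
      unfolding \<kappa>_def pos_divide_le_eq[OF rc] by (simp add: mult.commute mult.left_commute)
    have gp1: "gapP xs t1 > 0" using gap_pos[OF st] .
    have "\<kappa> ^ N \<le> (gapP xs t1 powr (1 / real N)) ^ N" using kg \<kappa> by (intro power_mono) auto
    also have "\<dots> = gapP xs t1" using powr_inv_pow[OF gp1 N] .
    finally have kN: "\<kappa> ^ N \<le> gapP xs t1" .
    have eg: "\<eta> \<le> gapP xs t1 * (1 - 1/r) / 2" unfolding \<eta>_def using kN r
      by (intro divide_right_mono mult_right_mono) auto
    have nd: "\<bar>x (qn l + 1) - z\<bar> \<ge> \<eta>" if "z \<in> set xs" for z
      using newpt_dist(1)[OF N r xi st that, of f] T(3) eg by linarith
    have e: "xs ! (t1 - 2) \<in> set xs" "xs ! (t1 - 1) \<in> set xs" using st by auto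
    have "x (qn l + 1) \<in> {0..1}" using newpt_dist(2,3)[OF N r xi st, of f] e T(3) sub by force
    moreover have "\<forall>n\<in>{1..qn l}. \<bar>x (qn l + 1) - x n\<bar> \<ge> \<eta>"
      using nd ptsS by (auto simp: xs_def)
    ultimately show ?thesis by blast
  qed
  define y where "y l = x (qn l + 1)" for l
  have ysep: "\<bar>y l - y l'\<bar> \<ge> \<eta>" if "l \<in> Hs" "l' \<in> Hs" "l < l'" for l l'
  proof -
    have l1: "l \<ge> 1" using that Hs by auto
    have "qn l + 1 \<le> qn (Suc l)" using runS[OF l1] by simp
    also have "qn (Suc l) \<le> qn l'" using qmono[of "Suc l" l'] that by simp
    finally have "qn l + 1 \<in> {1..qn l'}" by simp
    then have "\<bar>y l' - y l\<bar> \<ge> \<eta>" using sep[OF that(2)] by (simp add: y_def)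
    then show ?thesis by (simp add: abs_minus_commute)
  qed
  define cell where "cell l = \<lfloor>y l * (2 / \<eta>)\<rfloor>" for l
  have inj: "inj_on cell Hs"
  proof (rule inj_onI)
    fix l l' assume ll: "l \<in> Hs" "l' \<in> Hs" "cell l = cell l'"
    show "l = l'"
    proof (rule ccontr)
      assume "l \<noteq> l'"
      then have "\<bar>y l - y l'\<bar> \<ge> \<eta>"
      proof (cases "l < l'")
        case True then show ?thesis using ysep ll by blast
      next
        case False then have "l' < l" using \<open>l \<noteq> l'\<close> by simp
        then have "\<bar>y l' - y l\<bar> \<ge> \<eta>" using ysep ll by blast
        then show ?thesis by (simp add: abs_minus_commute)
      qed
      moreover have "\<bar>y l * (2 / \<eta>) - y l' * (2 / \<eta>)\<bar> < 1"
        using ll(3) unfolding cell_def by linarith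
      moreover have "y l * (2 / \<eta>) - y l' * (2 / \<eta>) = (y l - y l') * (2 / \<eta>)"
        by (rule left_diff_distrib[symmetric])
      moreover have "\<bar>(y l - y l') * (2 / \<eta>)\<bar> = \<bar>y l - y l'\<bar> * (2 / \<eta>)"
      proof -
        have "\<bar>2 / \<eta>\<bar> = 2 / \<eta>" using \<eta> by simp
        then show ?thesis by (simp only: abs_mult)
      qed
      moreover have "\<eta> * (2 / \<eta>) \<le> \<bar>y l - y l'\<bar> * (2 / \<eta>)"
        using \<open>\<bar>y l - y l'\<bar> \<ge> \<eta>\<close> \<eta> by (intro mult_right_mono) auto
      moreover have "\<eta> * (2 / \<eta>) = 2" using \<eta> by simp
      ultimately show False by linarith
    qed
  qed
  have "cell ` Hs \<subseteq> {0..\<lceil>2 / \<eta>\<rceil>}"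
  proof
    fix c assume "c \<in> cell ` Hs"
    then obtain l where l: "l \<in> Hs" "c = cell l" by auto
    have y01: "y l \<in> {0..1}" using sep[OF l(1)] by (simp add: y_def)
    have "0 \<le> y l * (2 / \<eta>)" using y01 \<eta> by simp
    moreover have "y l * (2 / \<eta>) \<le> 2 / \<eta>" using y01 \<eta> by (intro mult_left_le_one_le) auto
    ultimately show "c \<in> {0..\<lceil>2 / \<eta>\<rceil>}" unfolding l cell_def
      by (auto intro: floor_le_ceiling order_trans[OF floor_mono ] simp: le_floor_iff)
  qed
  then have "finite (cell ` Hs)" by (rule finite_subset) auto
  then have "finite Hs" using inj finite_imageD by blast
  then show False using Hs by simp
qed

end
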